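(* Let $k\ge2$, $K\ge1$ be integers, let $R\ge k$ be an integer and $L$ a positive integer divisible by $R^{K-1}$. For $A$ dividing $L$ let $f_A=(\mathsf{1}^A\mathsf{2}^A\cdots\mathsf{k}^A)^{L/A}\in[k]^{kL}$, and for a word $w$ over $[K]$ let $\hat w$ be the word over $[k]$ obtained by replacing each symbol $l\in[K]$ of $w$ by $f_{R^{l-1}}$. Let $w_1,w_2$ be words over $[K]$ and let $s=(w_1',w_2')$ be a badly-matched common subsequence between $\hat w_1$ and $\hat w_2$. Then \[\operatorname{span} w_1'+\operatorname{span} w_2'\ \ge\ \left(k+1-\frac kR-\frac{8R^{K-1}}{L}\right)\operatorname{len} s-16R^{K-1}.\]
   Context: $\alpha^A$ denotes letter $\alpha$ repeated $A$ times, and $u^m$ denotes $m$ concatenated copies of the word $u$. Symbols are distinguishable positions. If a symbol $x$ of $\hat w$ arises from expanding the symbol $y$ of $w$, then $y$ is the parent of $x$. A common subsequence of words $u_1,u_2$ is a pair $(u_1',u_2')$ of subsequences of $u_1,u_2$ that are equal as words, with length $\operatorname{len}$ their common length. For a common subsequence $(w_1',w_2')$ of $\hat w_1,\hat w_2$, its $i$-th symbol is well-matched if the parents of $w_1'[i]$ and $w_2'[i]$ are the same letter of $[K]$; the common subsequence is badly-matched if none of its symbols is well-matched. The span of a subsequence $w'$ in $w$ is the length of the shortest subword (block of consecutive symbols) of $w$ containing $w'$; $\operatorname{span} w_1'$ is taken in $\hat w_1$ and $\operatorname{span}w_2'$ in $\hat w_2$. *)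

theory Defs
  imports Complex_Main
begin

text \<open>Words are lists of naturals; the alphabet [k] is {1..k}.\<close>

definition fword :: "nat \<Rightarrow> nat \<Rightarrow> nat \<Rightarrow> nat list" where
  "fword k L A = concat (replicate (L div A) (concat (map (\<lambda>c. replicate A c) [1..<Suc k])))"

definition hat :: "nat \<Rightarrow> nat \<Rightarrow> nat \<Rightarrow> nat list \<Rightarrow> nat list" where
  "hat k L R w = concat (map (\<lambda>l. fword k L (R ^ (l - 1))) w)"

definition subseq_idx :: "nat list \<Rightarrow> 'a list \<Rightarrow> bool" where
  "subseq_idx I u \<longleftrightarrow> sorted_wrt (<) I \<and> (\<forall>i\<in>set I. i < length u)"

definition common_subseq :: "'a list \<Rightarrow> 'a list \<Rightarrow> nat list \<Rightarrow> nat list \<Rightarrow> bool" where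
  "common_subseq u1 u2 I1 I2 \<longleftrightarrow> subseq_idx I1 u1 \<and> subseq_idx I2 u2 \<and>
     length I1 = length I2 \<and> (\<forall>i<length I1. u1 ! (I1 ! i) = u2 ! (I2 ! i))"

text \<open>Parent letter (in w) of position p of hat w: each letter of w expands to a block
  of length k*L (valid when every R^(l-1) divides L).\<close>
definition parent :: "nat \<Rightarrow> nat \<Rightarrow> nat list \<Rightarrow> nat \<Rightarrow> nat" where
  "parent k L w p = w ! (p div (k * L))"

definition badly_matched :: "nat \<Rightarrow> nat \<Rightarrow> nat list \<Rightarrow> nat list \<Rightarrow> nat list \<Rightarrow> nat list \<Rightarrow> bool" where
  "badly_matched k L w1 w2 I1 I2 \<longleftrightarrow>
     (\<forall>i<length I1. parent k L w1 (I1 ! i) \<noteq> parent k L w2 (I2 ! i))"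

definition span :: "nat list \<Rightarrow> nat" where
  "span I = (if I = [] then 0 else last I - hd I + 1)"

end

theory Submission
  imports Defs
begin



lemma concat_nth_uniform:
  assumes "\<forall>xs\<in>set xss. length xs = m" "p < length xss * m"
  shows "concat xss ! p = xss ! (p div m) ! (p mod m)"
  using assms
proof (induction xss arbitrary: p)
  case Nil then show ?case by simp
next
  case (Cons xs xss)
  have lx: "length xs = m" using Cons.prems by simp
  have m0: "m > 0" using Cons.prems by (cases "m = 0") auto
  show ?case
  proof (cases "p < m")
    case True
    then show ?thesis using lx by (simp add: nth_append)
  next
    case False
    have "p - m < length xss * m" using Cons.prems False by auto
    then have "concat xss ! (p - m) = xss ! ((p - m) div m) ! ((p - m) mod m)"
      using Cons by auto
    moreover have "(p - m) div m = p div m - 1" using False m0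
      by (simp add: le_div_geq)
    moreover have "(p - m) mod m = p mod m" using False by (simp add: le_mod_geq)
    moreover have "p div m \<ge> 1" using False m0 by (simp add: le_div_geq)
    ultimately show ?thesis using lx False
      by (simp add: nth_append nth_Cons')
  qed
qed

lemma length_blk: "length (concat (map (\<lambda>c. replicate A c) [1..<Suc k])) = k * A"
  by (simp add: length_concat o_def sum_list_triv)

lemma length_concat_rep: "length (concat (replicate n xs)) = n * length xs"
  by (induction n) auto

lemma length_fword:
  assumes "A dvd L" "A > 0"
  shows "length (fword k L A) = k * L"
proof -
  have "length (fword k L A) = L div A * (k * A)"
    unfolding fword_def length_concat_rep length_blk ..
  also have "L div A * (k * A) = k * (L div A * A)" by (simp add: ac_simps)
  also have "\<dots> = k * L" using assms by simp
  finally show ?thesis .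
qed

lemma fword_nth:
  assumes "A dvd L" "A > 0" "j < k * L"
  shows "fword k L A ! j = (j div A) mod k + 1"
proof -
  define blk where "blk = concat (map (\<lambda>c. replicate A c) [1..<Suc k])"
  have lb: "length blk = k * A" unfolding blk_def by (rule length_blk)
  have kA: "k * A > 0" using assms by (cases k) auto
  have Ld: "L div A * (k * A) = k * L"
    using assms(1,2) length_fword[of A L k] unfolding fword_def length_concat_rep length_blk by simp
  have "fword k L A = concat (replicate (L div A) blk)" unfolding fword_def blk_def by simp
  also have "\<dots> ! j = replicate (L div A) blk ! (j div (k*A)) ! (j mod (k*A))"
  proof (rule concat_nth_uniform)
    show "\<forall>xs\<in>set (replicate (L div A) blk). length xs = k * A" using lb by simp
    show "j < length (replicate (L div A) blk) * (k * A)" unfolding length_replicate Ld by (rule assms(3))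
  qed
  also have "\<dots> = blk ! (j mod (k*A))"
  proof -
    have "j div (k*A) < L div A" using assms Ld
      by (metis div_less_iff_less_mult kA mult.commute)
    then show ?thesis by simp
  qed
  also have "\<dots> = map (\<lambda>c. replicate A c) [1..<Suc k] ! (j mod (k*A) div A) ! (j mod (k*A) mod A)"
    unfolding blk_def
    by (rule concat_nth_uniform) (use kA assms in \<open>auto simp: mult.commute\<close>)
  also have "\<dots> = (j mod (k*A)) div A + 1"
  proof -
    have "j mod (k*A) div A < k" using kA assms
      by (metis div_less_iff_less_mult mod_less_divisor mult.commute)
    then show ?thesis using assms(2) by (simp del: upt_Suc)
  qed
  also have "(j mod (k*A)) div A = (j div A) mod k"
  proof -
    have "j mod (k*A) = A * (j div A mod k) + j mod A"
      using mod_mult2_eq[of j A k] by (simp add: mult.commute)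
    then show ?thesis using assms(2) by simp
  qed
  finally show ?thesis .
qed


lemma length_concat_uniform:
  "\<forall>xs\<in>set xss. length xs = m \<Longrightarrow> length (concat xss) = length xss * m"
  by (induction xss) auto

lemma length_hat:
  assumes "\<forall>l\<in>set w. R^(l-1) dvd L" "R > 0"
  shows "length (hat k L R w) = length w * (k*L)"
proof -
  have "\<forall>xs\<in>set (map (\<lambda>l. fword k L (R ^ (l - 1))) w). length xs = k * L"
    using assms length_fword by auto
  then show ?thesis unfolding hat_def using length_concat_uniform by fastforce
qed

lemma div_mod_blk:
  fixes p A k L :: nat
  assumes "A dvd L" "A > 0"
  shows "((p mod (k*L)) div A) mod k = (p div A) mod k"
proof -
  obtain m where Lm: "L = A * m" using assms by blast
  have "p = (k*L) * (p div (k*L)) + p mod (k*L)" by simp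
  also have "(k*L) * (p div (k*L)) = A * (k * m * (p div (k*L)))" using Lm by (simp add: ac_simps)
  finally have "p div A = k * m * (p div (k*L)) + (p mod (k*L)) div A"
    using assms(2) by (metis div_mult_self3 add.commute mult.commute neq0_conv assms(2))
  then show ?thesis by (simp add: mult.assoc)
qed

lemma hat_nth:
  assumes "\<forall>l\<in>set w. R^(l-1) dvd L" "R > 0" "p < length w * (k*L)"
  shows "hat k L R w ! p = (p div R^(w!(p div (k*L)) - 1)) mod k + 1"
proof -
  have kL: "k * L > 0" using assms(3) by (cases "k*L = 0") auto
  have pl: "p div (k*L) < length w" using assms(3) kL
    by (simp add: div_less_iff_less_mult)
  have "hat k L R w ! p = map (\<lambda>l. fword k L (R ^ (l - 1))) w ! (p div (k*L)) ! (p mod (k*L))"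
    unfolding hat_def
  proof (rule concat_nth_uniform)
    show "\<forall>xs\<in>set (map (\<lambda>l. fword k L (R ^ (l - 1))) w). length xs = k * L"
      using assms length_fword by auto
    show "p < length (map (\<lambda>l. fword k L (R ^ (l - 1))) w) * (k * L)" using assms by simp
  qed
  also have "\<dots> = fword k L (R ^ (w!(p div (k*L)) - 1)) ! (p mod (k*L))" using pl by simp
  also have "\<dots> = ((p mod (k*L)) div R ^ (w!(p div (k*L)) - 1)) mod k + 1"
    apply (rule fword_nth)
    using assms pl kL by auto
  also have "\<dots> = (p div R^(w!(p div (k*L)) - 1)) mod k + 1"
    using div_mod_blk assms pl by auto
  finally show ?thesis .
qed



lemma mod_eq_gap:
  fixes u u' k :: nat
  assumes "u < u'" "u mod k = u' mod k"
  shows "u + k \<le> u'"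
proof -
  have "k dvd (u' - u)" using assms
    by (metis mod_eq_dvd_iff_nat less_imp_le)
  then obtain c where c: "u' - u = k * c" by blast
  have "c \<ge> 1" using c assms by (cases c) auto
  then have "k * c \<ge> k" by simp
  then show ?thesis using c assms by linarith
qed

lemma fine_same:
  fixes p p' a k :: nat
  assumes "a > 0" "k \<ge> 1" "p < p'" "(p div a) mod k = (p' div a) mod k"
  shows "real (p' - p) + real (k-1) * (real (p' mod a) - real (p mod a)) \<ge> real k"
proof -
  define u where "u = p div a"
  define u' where "u' = p' div a"
  define o1 where "o1 = p mod a"
  define o2 where "o2 = p' mod a"
  have p: "p = u * a + o1" unfolding u_def o1_def by simp
  have p': "p' = u' * a + o2" unfolding u'_def o2_def by simp
  have o1a: "o1 < a" "o2 < a" unfolding o1_def o2_def using assms by auto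
  have uu: "u \<le> u'" unfolding u_def u'_def using assms by (simp add: div_le_mono)
  have rd: "real (p' - p) = real p' - real p" using assms by simp
  have kk: "real (k-1) = real k - 1" using assms by simp
  show ?thesis
  proof (cases "u = u'")
    case True
    then have "real p' - real p = real o2 - real o1" using p p' by simp
    moreover have "real p' - real p \<ge> 1" using assms by simp
    ultimately have e: "real o2 - real o1 = real p' - real p" and d1: "real p' - real p \<ge> 1" by auto
    have "real k * 1 \<le> real k * (real p' - real p)" using d1 by (intro mult_left_mono) auto
    then have "real (p' - p) + (real k - 1) * (real o2 - real o1) \<ge> real k"
      unfolding e rd by (simp add: algebra_simps)
    then show ?thesis unfolding o1_def[symmetric] o2_def[symmetric] kk by simp
  next
    case False
    then have "u + k \<le> u'" using uu mod_eq_gap assms(4) u_def u'_def by auto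
    then have "real u + real k \<le> real u'" by linarith
    then have "(real u + real k) * real a \<le> real u' * real a" by (simp add: mult_right_mono)
    then have h: "real p' - real p \<ge> real k * real a + real o2 - real o1"
      using p p' by (simp add: algebra_simps)
    have "real o1 \<le> real a - 1" using o1a by linarith
    then have h2: "real k * real o1 \<le> real k * (real a - 1)" by (simp add: mult_left_mono)
    have h3: "real k * real o2 \<ge> 0" by simp
    have "real (p' - p) + (real k - 1) * (real o2 - real o1) \<ge> real k"
    proof -
      have eq: "(real k - 1) * (real o2 - real o1) = real k * real o2 - real k * real o1 - real o2 + real o1"
        by (simp add: algebra_simps)
      have eq2: "real k * (real a - 1) = real k * real a - real k" by (simp add: algebra_simps)
      show "real (p' - p) + (real k - 1) * (real o2 - real o1) \<ge> real k"
        unfolding eq rd using h h2 h3 eq2 by linarith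
    qed
    then show ?thesis unfolding kk o1_def o2_def .
  qed
qed


lemma fine_any:
  fixes p p' a k :: nat
  assumes "a > 0" "k \<ge> 1" "p < p'"
  shows "real (p' - p) + real (k-1) * (real (p' mod a) - real (p mod a)) \<ge> 1 - real (k-1) * (real a - 1)"
proof -
  have "p mod a < a" using assms by simp
  then have "real (p' mod a) - real (p mod a) \<ge> - (real a - 1)" by linarith
  then have "real (k-1) * (real (p' mod a) - real (p mod a)) \<ge> real (k-1) * (- (real a - 1))"
    by (intro mult_left_mono) auto
  moreover have "real (p' - p) \<ge> 1" using assms by simp
  moreover have "real (k-1) * (- (real a - 1)) = - (real (k-1) * (real a - 1))" by (simp only: mult_minus_right)
  ultimately show ?thesis by linarith
qed

lemma coarse_same:
  fixes q q' b :: nat and c :: real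
  assumes "q div b = q' div b" "q < q'" "0 \<le> c" "c \<le> 1"
  shows "real (q' - q) - c * (real (q' mod b) - real (q mod b)) \<ge> 1 - c"
proof -
  have "real q = real (q div b * b + q mod b)" by simp
  also have "\<dots> = real (q div b) * real b + real (q mod b)" by (simp only: of_nat_add of_nat_mult)
  finally have e1: "real q = real (q div b) * real b + real (q mod b)" .
  have "real q' = real (q' div b * b + q' mod b)" by simp
  also have "\<dots> = real (q' div b) * real b + real (q' mod b)" by (simp only: of_nat_add of_nat_mult)
  finally have e2: "real q' = real (q' div b) * real b + real (q' mod b)" .
  have rd: "real (q' - q) = real q' - real q" using assms by simp
  have e: "real (q' mod b) - real (q mod b) = real (q' - q)" unfolding rd using e1 e2 assms(1) by simp
  have "(1 - c) * 1 \<le> (1 - c) * real (q' - q)" using assms by (intro mult_left_mono) auto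
  then show ?thesis unfolding e by (simp add: algebra_simps)
qed

lemma coarse_diff:
  fixes q q' b :: nat and c :: real
  assumes "q div b < q' div b" "b > 0" "0 \<le> c" "c \<le> 1"
  shows "real (q' - q) - c * (real (q' mod b) - real (q mod b)) \<ge> 1 + c * (real b - 1)"
proof -
  define v where "v = q div b"
  define v' where "v' = q' div b"
  define O1 where "O1 = q mod b"
  define O2 where "O2 = q' mod b"
  have q: "q = v * b + O1" unfolding v_def O1_def by simp
  have q': "q' = v' * b + O2" unfolding v'_def O2_def by simp
  have "v + 1 \<le> v'" using assms v_def v'_def by simp
  then have "real v + 1 \<le> real v'" by linarith
  then have "(real v + 1) * real b \<le> real v' * real b" by (simp add: mult_right_mono)
  then have h: "real q' - real q \<ge> real b + real O2 - real O1"
    using q q' by (simp add: algebra_simps)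
  have qq: "q < q'"
  proof (rule ccontr)
    assume "\<not> q < q'"
    then have "q' div b \<le> q div b" by (simp add: div_le_mono)
    then show False using assms by simp
  qed
  have rd: "real (q' - q) = real q' - real q" using qq by simp
  have "O1 < b" unfolding O1_def using assms by simp
  then have x: "real O2 - real O1 \<ge> - (real b - 1)" by linarith
  have "(1 - c) * (real O2 - real O1) \<ge> (1 - c) * (- (real b - 1))"
    using x assms by (intro mult_left_mono) auto
  then have "real (q' - q) - c * (real O2 - real O1) \<ge> 1 + c * (real b - 1)"
    unfolding rd using h by (simp add: algebra_simps)
  then show ?thesis unfolding O1_def O2_def .
qed

definition Fpot :: "nat \<Rightarrow> nat \<Rightarrow> nat \<Rightarrow> nat \<Rightarrow> nat \<Rightarrow> nat \<Rightarrow> real" where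
  "Fpot k R a b p q = real (k-1) * real (p mod a) - real k / real R * real (q mod b)"

lemma core:
  fixes k R a b p q p' q' :: nat
  assumes "k \<ge> 2" "R \<ge> k" "a > 0" "R * a \<le> b" "p < p'" "q < q'"
    "(p div a) mod k = (q div b) mod k" "(p' div a) mod k = (q' div b) mod k"
  shows "real (p' - p) + real (q' - q) + (Fpot k R a b p' q' - Fpot k R a b p q)
     \<ge> real k + 1 - real k / real R"
proof -
  define c where "c = real k / real R"
  have R0: "real R > 0" using assms by simp
  have c0: "0 \<le> c" "c \<le> 1" unfolding c_def using assms R0 by auto
  have "R * a > 0" using assms by simp
  then have b0: "b > 0" using assms by linarith
  have split: "real (p' - p) + real (q' - q) + (Fpot k R a b p' q' - Fpot k R a b p q)
    = (real (p' - p) + real (k-1) * (real (p' mod a) - real (p mod a)))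
      + (real (q' - q) - c * (real (q' mod b) - real (q mod b)))"
    unfolding Fpot_def c_def by (simp add: algebra_simps)
  have qq: "q div b \<le> q' div b" using assms by (simp add: div_le_mono)
  show ?thesis
  proof (cases "q div b = q' div b")
    case True
    then have "(p div a) mod k = (p' div a) mod k" using assms by simp
    then have f: "real (p' - p) + real (k-1) * (real (p' mod a) - real (p mod a)) \<ge> real k"
      using fine_same assms by auto
    have g: "real (q' - q) - c * (real (q' mod b) - real (q mod b)) \<ge> 1 - c"
      using coarse_same True assms c0 by auto
    show ?thesis unfolding split using f g c_def by linarith
  next
    case False
    then have lt: "q div b < q' div b" using qq by simp
    have f: "real (p' - p) + real (k-1) * (real (p' mod a) - real (p mod a)) \<ge> 1 - real (k-1) * (real a - 1)"
      using fine_any assms by auto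
    have g: "real (q' - q) - c * (real (q' mod b) - real (q mod b)) \<ge> 1 + c * (real b - 1)"
      using coarse_diff lt b0 c0 by auto
    have "real R * real a \<le> real b" using assms(4) by (metis of_nat_le_iff of_nat_mult)
    then have "real k * (real R * real a) \<le> real k * real b" by (intro mult_left_mono) auto
    then have "c * real b \<ge> real k * real a" unfolding c_def using R0
      by (simp add: field_simps)
    moreover have "real (k-1) * (real a - 1) = real k * real a - real a - real k + 1"
      using assms by (simp add: algebra_simps of_nat_diff)
    moreover have "c * (real b - 1) = c * real b - c" by (simp add: algebra_simps)
    ultimately show ?thesis unfolding split using f g c_def assms(3) by linarith
  qed
qed




lemma pow_dvd_L:
  fixes R K L l :: nat
  assumes "R ^ (K - 1) dvd L" "l \<in> {1..K}"
  shows "R ^ (l - 1) dvd L"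
proof -
  have "l - 1 \<le> K - 1" using assms by auto
  then have "R ^ (l - 1) dvd R ^ (K - 1)" by (rule le_imp_power_dvd)
  then show ?thesis using assms(1) by (rule dvd_trans)
qed

lemma pair_facts:
  fixes k K R L p q :: nat and w1 w2 :: "nat list"
  assumes "k \<ge> 2" "R \<ge> k" "L > 0" "R ^ (K - 1) dvd L"
    and "set w1 \<subseteq> {1..K}" and "set w2 \<subseteq> {1..K}"
    and "p < length w1 * (k*L)" "q < length w2 * (k*L)"
    and "hat k L R w1 ! p = hat k L R w2 ! q"
    and "w1 ! (p div (k*L)) \<noteq> w2 ! (q div (k*L))"
  defines "a \<equiv> R ^ (w1 ! (p div (k*L)) - 1)" and "b \<equiv> R ^ (w2 ! (q div (k*L)) - 1)"
  shows "a > 0" "b > 0" "a \<le> R ^ (K - 1)" "b \<le> R ^ (K - 1)"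
    "(a < b \<and> R * a \<le> b) \<or> (b < a \<and> R * b \<le> a)"
    "(p div a) mod k = (q div b) mod k"
proof -
  have R1: "R > 1" using assms by simp
  have N0: "k * L > 0" using assms by simp
  have i1: "p div (k*L) < length w1" using assms(7) N0 by (simp add: div_less_iff_less_mult)
  have i2: "q div (k*L) < length w2" using assms(8) N0 by (simp add: div_less_iff_less_mult)
  define l1 where "l1 = w1 ! (p div (k*L))"
  define l2 where "l2 = w2 ! (q div (k*L))"
  have l1K: "l1 \<in> {1..K}" unfolding l1_def using i1 assms(5) nth_mem by blast
  have l2K: "l2 \<in> {1..K}" unfolding l2_def using i2 assms(6) nth_mem by blast
  have dv1: "\<forall>l\<in>set w1. R^(l-1) dvd L" using assms(4,5) pow_dvd_L by blast
  have dv2: "\<forall>l\<in>set w2. R^(l-1) dvd L" using assms(4,6) pow_dvd_L by blast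
  show "a > 0" "b > 0" unfolding a_def b_def using R1 by simp_all
  show "a \<le> R ^ (K - 1)" unfolding a_def l1_def[symmetric]
    using l1K R1 by (intro power_increasing) auto
  show "b \<le> R ^ (K - 1)" unfolding b_def l2_def[symmetric]
    using l2K R1 by (intro power_increasing) auto
  have ne: "l1 - 1 \<noteq> l2 - 1" using l1K l2K assms(10) l1_def l2_def by auto
  show "(a < b \<and> R * a \<le> b) \<or> (b < a \<and> R * b \<le> a)"
  proof (cases "l1 - 1 < l2 - 1")
    case True
    then have "R ^ Suc (l1 - 1) \<le> R ^ (l2 - 1)" using R1 by (intro power_increasing) auto
    moreover have "R ^ (l1 - 1) < R ^ (l2 - 1)" using True R1 by simp
    ultimately show ?thesis unfolding a_def b_def l1_def[symmetric] l2_def[symmetric] by simp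
  next
    case False
    then have F: "l2 - 1 < l1 - 1" using ne by simp
    then have "R ^ Suc (l2 - 1) \<le> R ^ (l1 - 1)" using R1 by (intro power_increasing) auto
    moreover have "R ^ (l2 - 1) < R ^ (l1 - 1)" using F R1 by simp
    ultimately show ?thesis unfolding a_def b_def l1_def[symmetric] l2_def[symmetric] by simp
  qed
  have "hat k L R w1 ! p = (p div a) mod k + 1" unfolding a_def
    using hat_nth[OF dv1 _ assms(7)] R1 by simp
  moreover have "hat k L R w2 ! q = (q div b) mod k + 1" unfolding b_def
    using hat_nth[OF dv2 _ assms(8)] R1 by simp
  ultimately show "(p div a) mod k = (q div b) mod k" using assms(9) by simp
qed

definition Phi :: "nat \<Rightarrow> nat \<Rightarrow> nat \<Rightarrow> nat \<Rightarrow> nat \<Rightarrow> nat \<Rightarrow> real" where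
  "Phi k R a b p q = (if a < b then Fpot k R a b p q else Fpot k R b a q p)"

lemma Fpot_bounds:
  fixes k R a b p q M :: nat
  assumes "k \<ge> 1" "R \<ge> k" "a > 0" "R * a \<le> b" "b \<le> M"
  shows "- real M \<le> Fpot k R a b p q" "Fpot k R a b p q \<le> real M"
proof -
  have R0: "real R > 0" using assms by simp
  have "(k-1) * (p mod a) \<le> (k-1) * a" using assms by (intro mult_left_mono) auto
  also have "\<dots> \<le> R * a" using assms by (intro mult_right_mono) auto
  finally have "(k-1) * (p mod a) \<le> M" using assms by linarith
  then have u: "real (k-1) * real (p mod a) \<le> real M"
    by (metis of_nat_le_iff of_nat_mult)
  have c1: "real k / real R \<le> 1" using assms R0 by simp
  have qb: "real (q mod b) \<le> real M"
  proof -
    have "R * a > 0" using assms by simp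
    then have "b > 0" using assms by linarith
    then have "q mod b \<le> b" by (simp add: less_imp_le)
    then show ?thesis using assms by simp
  qed
  have "real k / real R * real (q mod b) \<le> 1 * real M"
    using c1 qb by (intro mult_mono) auto
  moreover have "real k / real R * real (q mod b) \<ge> 0" by simp
  moreover have "real (k-1) * real (p mod a) \<ge> 0" by simp
  ultimately show "- real M \<le> Fpot k R a b p q" "Fpot k R a b p q \<le> real M"
    unfolding Fpot_def using u by linarith+
qed

lemma Phi_bounds:
  fixes k R a b p q M :: nat
  assumes "k \<ge> 1" "R \<ge> k" "a > 0" "b > 0" "(a < b \<and> R * a \<le> b) \<or> (b < a \<and> R * b \<le> a)"
    "a \<le> M" "b \<le> M"
  shows "- real M \<le> Phi k R a b p q" "Phi k R a b p q \<le> real M"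
  using assms Fpot_bounds[of k R a b M p q] Fpot_bounds[of k R b a M q p]
  unfolding Phi_def by auto

lemma Phi_step:
  fixes k R a b p q p' q' :: nat
  assumes "k \<ge> 2" "R \<ge> k" "a > 0" "b > 0" "(a < b \<and> R * a \<le> b) \<or> (b < a \<and> R * b \<le> a)"
    "p < p'" "q < q'"
    "(p div a) mod k = (q div b) mod k" "(p' div a) mod k = (q' div b) mod k"
  shows "real (p' - p) + real (q' - q) + (Phi k R a b p' q' - Phi k R a b p q)
     \<ge> real k + 1 - real k / real R"
proof (cases "a < b")
  case True
  then show ?thesis using core[of k R a b p p' q q'] assms unfolding Phi_def by auto
next
  case False
  then have "b < a \<and> R * b \<le> a" using assms by auto
  then show ?thesis using core[of k R b a q q' p p'] assms False unfolding Phi_def by auto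
qed



lemma blk_bound:
  fixes x y N :: nat
  assumes "y \<le> x" "N > 0"
  shows "real N * real (x div N - y div N) \<le> real (x - y) + real N"
proof -
  have h1: "N * (x div N) \<le> x" by (simp add: mult.commute)
  have h2: "y < N * (y div N) + N"
    using assms by (metis add.commute mod_less_divisor mult.commute mod_div_mult_eq nat_add_left_cancel_less)
  have "N * (x div N - y div N) = N * (x div N) - N * (y div N)" by (simp add: diff_mult_distrib2)
  then have "N * (x div N - y div N) \<le> (x - y) + N" using h1 h2 assms(1) by linarith
  then show ?thesis by (metis of_nat_add of_nat_le_iff of_nat_mult)
qed



theorem lemma3p4:
  fixes k K R L :: nat and w1 w2 I1 I2 :: "nat list"
  assumes "k \<ge> 2" and "K \<ge> 1" and "R \<ge> k" and "L > 0" and "R ^ (K - 1) dvd L"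
    and "set w1 \<subseteq> {1..K}" and "set w2 \<subseteq> {1..K}"
    and "common_subseq (hat k L R w1) (hat k L R w2) I1 I2"
    and "badly_matched k L w1 w2 I1 I2"
  shows "real (span I1) + real (span I2) \<ge>
    (real k + 1 - real k / real R - 8 * real R ^ (K - 1) / real L) * real (length I1)
    - 16 * real R ^ (K - 1)"
proof -
  define N where "N = k * L"
  define n where "n = length I1"
  define M where "M = R ^ (K - 1)"
  have N0: "N > 0" unfolding N_def using assms by simp
  have R0: "R > 0" using assms by simp
  have s1: "sorted_wrt (<) I1" and s2: "sorted_wrt (<) I2"
    and b1: "\<forall>i\<in>set I1. i < length (hat k L R w1)" and b2: "\<forall>i\<in>set I2. i < length (hat k L R w2)"
    and len: "length I2 = n" and lett: "\<forall>i<n. hat k L R w1 ! (I1 ! i) = hat k L R w2 ! (I2 ! i)"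
    using assms(8) unfolding common_subseq_def subseq_idx_def n_def by auto
  have dv1: "\<forall>l\<in>set w1. R^(l-1) dvd L" using assms(5,6) pow_dvd_L by blast
  have dv2: "\<forall>l\<in>set w2. R^(l-1) dvd L" using assms(5,7) pow_dvd_L by blast
  have lh1: "length (hat k L R w1) = length w1 * N" unfolding N_def using length_hat[OF dv1 R0] .
  have lh2: "length (hat k L R w2) = length w2 * N" unfolding N_def using length_hat[OF dv2 R0] .
  have in1: "\<And>j. j < n \<Longrightarrow> I1 ! j < length w1 * N" using b1 lh1 n_def nth_mem by metis
  have in2: "\<And>j. j < n \<Longrightarrow> I2 ! j < length w2 * N" using b2 lh2 len nth_mem by metis
  have par: "\<And>j. j < n \<Longrightarrow> w1 ! (I1 ! j div N) \<noteq> w2 ! (I2 ! j div N)"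
    using assms(9) unfolding badly_matched_def parent_def N_def n_def by auto
  define A1 where "A1 j = R ^ (w1 ! (I1 ! j div N) - 1)" for j
  define A2 where "A2 j = R ^ (w2 ! (I2 ! j div N) - 1)" for j
  define Ph where "Ph j = Phi k R (A1 j) (A2 j) (I1 ! j) (I2 ! j)" for j
  define t where "t = real k + 1 - real k / real R"
  have pf: "A1 j > 0 \<and> A2 j > 0 \<and> A1 j \<le> M \<and> A2 j \<le> M \<and>
      ((A1 j < A2 j \<and> R * A1 j \<le> A2 j) \<or> (A2 j < A1 j \<and> R * A2 j \<le> A1 j)) \<and>
      (I1 ! j div A1 j) mod k = (I2 ! j div A2 j) mod k" if "j < n" for j
    using pair_facts[OF assms(1,3,4,5,6,7), of "I1 ! j" "I2 ! j"] in1[OF that] in2[OF that]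
      lett that par[OF that]
    unfolding A1_def A2_def M_def N_def by auto
  have Phb: "- real M \<le> Ph j \<and> Ph j \<le> real M" if "j < n" for j
    using Phi_bounds[of k R "A1 j" "A2 j" M "I1 ! j" "I2 ! j"] pf[OF that] assms
    unfolding Ph_def by auto
  have mono1: "I1 ! i < I1 ! j" if "i < j" "j < n" for i j
    using s1 that unfolding n_def by (simp add: sorted_wrt_iff_nth_less)
  have mono2: "I2 ! i < I2 ! j" if "i < j" "j < n" for i j
    using s2 that len by (simp add: sorted_wrt_iff_nth_less)
  have tle: "t \<le> real k + 1" unfolding t_def by simp
  have kM: "k \<le> M" if "0 < n"
  proof -
    have h: "A1 0 > 0" "A2 0 > 0" "A1 0 \<le> M" "A2 0 \<le> M"
      "(A1 0 < A2 0 \<and> R * A1 0 \<le> A2 0) \<or> (A2 0 < A1 0 \<and> R * A2 0 \<le> A1 0)"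
      using pf[OF that] by auto
    have "R \<le> R * A1 0" "R \<le> R * A2 0" using h(1,2) by simp_all
    then have "R \<le> M" using h(3-5) by (elim disjE conjE) linarith+
    then show ?thesis using assms(3) by simp
  qed
  have inv: "real (I1!j - I1!0) + real (I2!j - I2!0) + Ph j - Ph 0 \<ge>
      t * real j - 4 * real M * (real (I1!j div N - I1!0 div N) + real (I2!j div N - I2!0 div N))"
    if "j < n" for j
    using that
  proof (induction j)
    case 0 then show ?case by simp
  next
    case (Suc j)
    have jn: "j < n" using Suc.prems by simp
    note IH = Suc.IH[OF jn]
    define p where "p = I1 ! j"
    define p' where "p' = I1 ! Suc j"
    define q where "q = I2 ! j"
    define q' where "q' = I2 ! Suc j"
    have pp: "p < p'" unfolding p_def p'_def using mono1 Suc.prems by simp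
    have qq: "q < q'" unfolding q_def q'_def using mono2 Suc.prems by simp
    have p0: "I1 ! 0 \<le> p" unfolding p_def using mono1[of 0 j] jn by (cases j) auto
    have q0: "I2 ! 0 \<le> q" unfolding q_def using mono2[of 0 j] jn by (cases j) auto
    have dp: "real (p' - I1!0) = real (p' - p) + real (p - I1!0)" using pp p0 by simp
    have dq: "real (q' - I2!0) = real (q' - q) + real (q - I2!0)" using qq q0 by simp
    have bp1: "I1!0 div N \<le> p div N" "p div N \<le> p' div N" using p0 pp by (simp_all add: div_le_mono)
    have bq1: "I2!0 div N \<le> q div N" "q div N \<le> q' div N" using q0 qq by (simp_all add: div_le_mono)
    have ebp: "real (p' div N - I1!0 div N) = real (p' div N - p div N) + real (p div N - I1!0 div N)"
      using bp1 by simp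
    have ebq: "real (q' div N - I2!0 div N) = real (q' div N - q div N) + real (q div N - I2!0 div N)"
      using bq1 by simp
    have step: "real (p' - p) + real (q' - q) + (Ph (Suc j) - Ph j) \<ge>
       t - 4 * real M * (real (p' div N - p div N) + real (q' div N - q div N))"
    proof (cases "p div N = p' div N \<and> q div N = q' div N")
      case True
      then have e1: "A1 (Suc j) = A1 j" "A2 (Suc j) = A2 j"
        unfolding A1_def A2_def p_def p'_def q_def q'_def by simp_all
      have "real (p' - p) + real (q' - q) + (Ph (Suc j) - Ph j) \<ge> t"
        unfolding Ph_def e1 p_def[symmetric] p'_def[symmetric] q_def[symmetric] q'_def[symmetric] t_def
        apply (rule Phi_step)
        using pf[OF jn] pf[OF Suc.prems] e1 assms(1,3) pp qq
        unfolding p_def p'_def q_def q'_def by auto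
      then show ?thesis using True by simp
    next
      case False
      then have "p div N < p' div N \<or> q div N < q' div N" using bp1 bq1 by auto
      then have D: "real (p' div N - p div N) + real (q' div N - q div N) \<ge> 1" by auto
      have "4 * real M * 1 \<le> 4 * real M * (real (p' div N - p div N) + real (q' div N - q div N))"
        using D by (intro mult_left_mono) auto
      moreover have "real (p' - p) \<ge> 1" "real (q' - q) \<ge> 1" using pp qq by auto
      moreover have "- real M \<le> Ph j \<and> Ph j \<le> real M" using Phb jn by blast
      moreover have "- real M \<le> Ph (Suc j) \<and> Ph (Suc j) \<le> real M" using Phb Suc.prems by blast
      moreover have "real k \<le> real M" using kM jn by simp
      ultimately show ?thesis using tle by linarith
    qed
    have "t * real (Suc j) = t * real j + t" by (simp add: algebra_simps)
    moreover have "4 * real M * (real (p' div N - I1!0 div N) + real (q' div N - I2!0 div N)) =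
      4 * real M * (real (p div N - I1!0 div N) + real (q div N - I2!0 div N)) +
      4 * real M * (real (p' div N - p div N) + real (q' div N - q div N))"
      unfolding ebp ebq by (simp add: algebra_simps)
    ultimately show ?case using IH step dp dq
      unfolding p_def[symmetric] p'_def[symmetric] q_def[symmetric] q'_def[symmetric] by linarith
  qed
  have Mr: "real M = real R ^ (K - 1)" unfolding M_def by simp
  show ?thesis
  proof (cases "n = 0")
    case True
    then have "I1 = []" "I2 = []" using len n_def by auto
    then show ?thesis unfolding span_def using True n_def by simp
  next
    case False
    then have n0: "0 < n" by simp
    define j where "j = n - 1"
    have jn: "j < n" unfolding j_def using n0 by simp
    have ne1: "I1 \<noteq> []" "I2 \<noteq> []" using n0 len n_def by auto
    have sp1: "span I1 = I1 ! j - I1 ! 0 + 1"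
      unfolding span_def using ne1 by (simp add: last_conv_nth hd_conv_nth j_def n_def)
    have sp2: "span I2 = I2 ! j - I2 ! 0 + 1"
      unfolding span_def using ne1 len by (simp add: last_conv_nth hd_conv_nth j_def)
    have p0: "I1 ! 0 \<le> I1 ! j" using mono1[of 0 j] jn by (cases j) auto
    have q0: "I2 ! 0 \<le> I2 ! j" using mono2[of 0 j] jn by (cases j) auto
    define D1 where "D1 = real (I1 ! j - I1 ! 0)"
    define D2 where "D2 = real (I2 ! j - I2 ! 0)"
    define E1 where "E1 = real (I1!j div N - I1!0 div N)"
    define E2 where "E2 = real (I2!j div N - I2!0 div N)"
    define D where "D = D1 + D2"
    define E where "E = E1 + E2"
    define X where "X = 8 * real M / real L * real n"
    have X0: "X \<ge> 0" unfolding X_def by simp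
    have I: "D + Ph j - Ph 0 \<ge> t * real j - 4 * real M * E"
      using inv[OF jn] unfolding D_def D1_def D2_def E_def E1_def E2_def by simp
    have B: "- real M \<le> Ph j \<and> Ph j \<le> real M" "- real M \<le> Ph 0 \<and> Ph 0 \<le> real M"
      using Phb jn n0 by auto
    have NE: "real N * E \<le> D + 2 * real N"
      using blk_bound[OF p0 N0] blk_bound[OF q0 N0]
      unfolding D_def D1_def D2_def E_def E1_def E2_def by (simp add: algebra_simps)
    have Nr: "real N > 0" using N0 by simp
    have EDN: "E \<le> D / real N + 2" using NE Nr by (simp add: field_simps)
    have kM': "real k \<le> real M" using kM n0 by simp
    have k2: "real k \<ge> 2" using assms(1) by simp
    have tj: "t * real j = t * real n - t" unfolding j_def using n0 by (simp add: of_nat_diff algebra_simps)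
    have goal_eq: "(real k + 1 - real k / real R - 8 * real R ^ (K - 1) / real L) * real (length I1)
        - 16 * real R ^ (K - 1) = t * real n - X - 16 * real M"
      unfolding t_def X_def Mr n_def by (simp add: algebra_simps)
    have lhs_eq: "real (span I1) + real (span I2) = D + 2"
      unfolding sp1 sp2 D_def D1_def D2_def by simp
    show ?thesis unfolding goal_eq lhs_eq
    proof (cases "D \<ge> t * real n")
      case True
      then show "t * real n - X - 16 * real M \<le> D + 2" using X0 by simp
    next
      case False
      then have Dlt: "D < t * real n" by simp
      have D0: "D \<ge> 0" unfolding D_def D1_def D2_def by simp
      have "t * real n \<le> (real k + 1) * real n" using tle by (intro mult_right_mono) auto
      also have "\<dots> \<le> (2 * real k) * real n" using k2 by (intro mult_right_mono) auto
      finally have D2k: "D \<le> 2 * real k * real n" using Dlt by simp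
      have "D / real N \<le> 2 * real n / real L"
        using D2k Nr assms(4) k2 unfolding N_def by (simp add: field_simps)
      then have "4 * real M * (D / real N) \<le> 4 * real M * (2 * real n / real L)"
        by (intro mult_left_mono) auto
      moreover have "4 * real M * (2 * real n / real L) = X" unfolding X_def by (simp add: field_simps)
      moreover have "4 * real M * E \<le> 4 * real M * (D / real N + 2)"
        using EDN by (intro mult_left_mono) auto
      moreover have "4 * real M * (D / real N + 2) = 4 * real M * (D / real N) + 8 * real M"
        by (simp add: algebra_simps)
      ultimately have "4 * real M * E \<le> X + 8 * real M" by linarith
      then show "t * real n - X - 16 * real M \<le> D + 2"
        using I B tj tle kM' by linarith
    qed
  qed
qed


end
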